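(* Let $\lambda:[0,\infty)\to\mathbb C$ be locally integrable and $R:[0,\infty)\to\mathbb C^{2\times2}$ with $\int_0^\infty\|R(t)\|dt<\infty$, and consider the system $$u_1'(x)=\Big[\begin{pmatrix}\lambda(x)&0\\0&-\lambda(x)\end{pmatrix}+R(x)\Big]u_1(x),\quad x\ge0.$$ Assume there is a constant $M$ such that $\int_x^y\operatorname{Re}\lambda(t)dt\ge-M$ for all $0\le x\le y$. Then every solution $u_1$ satisfies, for all $x\ge0$, $$\|u_1(x)\|\le\|u_1(0)\|\,e^{\int_0^x\operatorname{Re}\lambda(t)dt}\sqrt{1+e^{4M}}\,e^{\sqrt{1+e^{4M}}\int_0^\infty\|R(t)\|dt}.$$
   Context: $\|\cdot\|$ denotes the Euclidean norm on $\mathbb C^2$ and the corresponding operator norm on $2\times2$ matrices. *)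

theory Defs
  imports "HOL-Analysis.Analysis"
begin

definition diag_pm :: "complex \<Rightarrow> complex^2^2" where
  "diag_pm l = (\<chi> i j. if i = j then (if i = 1 then l else - l) else 0)"

definition opnorm :: "complex^2^2 \<Rightarrow> real" where
  "opnorm A = onorm (\<lambda>v. A *v v)"

end

theory Submission
  imports Defs
begin

lemma const_lemma:
  fixes Q :: "real \<Rightarrow> 'a::real_normed_vector" and w :: "real \<Rightarrow> real"
  assumes ab: "a \<le> b" and w: "w integrable_on {a..b}"
    and loc: "\<And>e. e > 0 \<Longrightarrow> \<exists>d>0. \<forall>s t. a \<le> s \<longrightarrow> s \<le> t \<longrightarrow> t \<le> b \<longrightarrow> t - s < d
              \<longrightarrow> norm (Q t - Q s) \<le> e * integral {s..t} w"
  shows "Q b = Q a"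
proof (rule ccontr)
  assume ne: "Q b \<noteq> Q a"
  define D where "D = norm (Q b - Q a)"
  have D: "D > 0" using ne by (simp add: D_def)
  define I where "I = integral {a..b} w"
  define e where "e = D / (\<bar>I\<bar> + 1)"
  have e: "e > 0" using D by (simp add: e_def add_pos_nonneg)
  obtain d where d: "d > 0" and dd: "\<And>s t. a \<le> s \<Longrightarrow> s \<le> t \<Longrightarrow> t \<le> b \<Longrightarrow> t - s < d
              \<Longrightarrow> norm (Q t - Q s) \<le> e * integral {s..t} w"
    using loc[OF e] by blast
  obtain n :: nat where n: "(b - a) / d < real n"
    using reals_Archimedean2 by blast
  have "0 \<le> (b - a) / d" using ab d by simp
  then have npos: "n > 0" using n by (metis of_nat_0 gr0I less_le_not_le)
  define x where "x i = a + real i * (b - a) / real n" for i :: nat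
  have step: "x (Suc i) - x i < d" for i
  proof -
    have "x (Suc i) - x i = (b - a) / real n" using npos by (simp add: x_def field_simps)
    also have "\<dots> < d" using n npos d by (simp add: field_simps)
    finally show ?thesis .
  qed
  have xmono: "a \<le> x i" for i using ab npos by (simp add: x_def)
  have xle: "i \<le> n \<Longrightarrow> x i \<le> b" for i
  proof -
    assume "i \<le> n"
    then have "real i * (b - a) / real n \<le> real n * (b - a) / real n"
      using ab npos by (intro divide_right_mono mult_right_mono) auto
    then show ?thesis using npos by (simp add: x_def)
  qed
  have xs: "x i \<le> x (Suc i)" for i using ab npos
    by (simp add: x_def field_simps)
  have main: "i \<le> n \<Longrightarrow> norm (Q (x i) - Q a) \<le> e * integral {a..x i} w" for i
  proof (induction i)
    case 0
    then show ?case by (simp add: x_def)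
  next
    case (Suc i)
    have wi: "w integrable_on {a..x (Suc i)}"
      using integrable_subinterval_real[OF w] xle[OF Suc.prems] by auto
    have comb: "integral {a..x i} w + integral {x i..x (Suc i)} w = integral {a..x (Suc i)} w"
      by (rule Henstock_Kurzweil_Integration.integral_combine[OF xmono xs wi])
    have "norm (Q (x (Suc i)) - Q a) \<le> norm (Q (x (Suc i)) - Q (x i)) + norm (Q (x i) - Q a)"
      by (metis diff_add_cancel norm_triangle_ineq add.commute diff_add_eq)
    also have "\<dots> \<le> e * integral {x i..x (Suc i)} w + e * integral {a..x i} w"
      using dd[OF xmono xs xle[OF Suc.prems] step] Suc by auto
    also have "\<dots> = e * integral {a..x (Suc i)} w" using comb by (metis add.commute distrib_left)
    finally show ?case .
  qed
  have "x n = b" using npos by (simp add: x_def)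
  with main[of n] have "D \<le> e * I" by (simp add: D_def I_def)
  also have "\<dots> \<le> e * \<bar>I\<bar>" using e by (simp add: mult_left_mono)
  also have "\<dots> < D" using D by (simp add: e_def field_simps)
  finally show False by simp
qed


lemma ai_mult_cont:
  fixes f G :: "real \<Rightarrow> 'a::{real_normed_field,euclidean_space}"
  assumes f: "f absolutely_integrable_on {a..b}" and G: "continuous_on {a..b} G"
  shows "(\<lambda>t. G t * f t) absolutely_integrable_on {a..b}"
proof (rule absolutely_integrable_bounded_measurable_product[OF bilinear_times _ _ _ f])
  show "G \<in> borel_measurable (lebesgue_on {a..b})"
    by (rule continuous_imp_measurable_on_sets_lebesgue[OF G]) auto
  show "{a..b} \<in> sets lebesgue" by auto
  show "bounded (G ` {a..b})"
    by (rule compact_imp_bounded, rule compact_continuous_image[OF G]) auto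
qed

lemma indef_cont:
  fixes f F :: "real \<Rightarrow> 'a::euclidean_space"
  assumes f: "f integrable_on {a..b}"
    and F: "\<And>x. x \<in> {a..b} \<Longrightarrow> F x = F a + integral {a..x} f"
  shows "continuous_on {a..b} F"
proof -
  have "continuous_on {a..b} (\<lambda>x. F a + integral {a..x} f)"
    by (intro continuous_intros indefinite_integral_continuous_1 f)
  then show ?thesis by (rule continuous_on_eq) (metis F)
qed

lemma indef_diff:
  fixes f F :: "real \<Rightarrow> 'a::euclidean_space"
  assumes f: "f integrable_on {a..b}"
    and F: "\<And>x. x \<in> {a..b} \<Longrightarrow> F x = F a + integral {a..x} f"
    and st: "a \<le> s" "s \<le> t" "t \<le> b"
  shows "F t - F s = integral {s..t} f"
proof -
  have "f integrable_on {a..t}" using integrable_subinterval_real[OF f] st by auto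
  then have "integral {a..s} f + integral {s..t} f = integral {a..t} f"
    using Henstock_Kurzweil_Integration.integral_combine st by blast
  then show ?thesis using F[of s] F[of t] st by (auto simp: algebra_simps)
qed

lemma prod_rule:
  fixes f g F G :: "real \<Rightarrow> 'a::{real_normed_field,euclidean_space}"
  assumes ab: "a \<le> b"
    and f: "f absolutely_integrable_on {a..b}" and g: "g absolutely_integrable_on {a..b}"
    and F: "\<And>x. x \<in> {a..b} \<Longrightarrow> F x = F a + integral {a..x} f"
    and G: "\<And>x. x \<in> {a..b} \<Longrightarrow> G x = G a + integral {a..x} g"
  shows "((\<lambda>t. f t * G t + F t * g t) has_integral (F b * G b - F a * G a)) {a..b}"
proof -
  have fi: "f integrable_on {a..b}" and fni: "(\<lambda>x. norm (f x)) integrable_on {a..b}"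
    using f absolutely_integrable_on_def by blast+
  have gi: "g integrable_on {a..b}" and gni: "(\<lambda>x. norm (g x)) integrable_on {a..b}"
    using g absolutely_integrable_on_def by blast+
  have Fc: "continuous_on {a..b} F" by (rule indef_cont[OF fi F])
  have Gc: "continuous_on {a..b} G" by (rule indef_cont[OF gi G])
  define h where "h t = f t * G t + F t * g t" for t
  have "(\<lambda>t. G t * f t + F t * g t) absolutely_integrable_on {a..b}"
    by (intro set_integral_add(1) ai_mult_cont f g Fc Gc)
  then have hi: "h integrable_on {a..b}"
    unfolding h_def absolutely_integrable_on_def by (simp add: mult.commute)
  define Q where "Q x = F x * G x - integral {a..x} h" for x
  define w where "w t = norm (f t) + norm (g t)" for t
  have wi: "w integrable_on {a..b}" unfolding w_def by (intro integrable_add fni gni)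
  have "Q b = Q a"
  proof (rule const_lemma[OF ab wi])
    fix e :: real assume e: "e > 0"
    have "uniformly_continuous_on {a..b} F" by (rule compact_uniformly_continuous[OF Fc compact_Icc])
    moreover have "e > 0" using e by simp
    ultimately obtain d1 where d1: "d1 > 0" and d1': "\<And>x x'. x \<in> {a..b} \<Longrightarrow> x' \<in> {a..b} \<Longrightarrow> dist x' x < d1 \<Longrightarrow> dist (F x') (F x) < e"
      unfolding uniformly_continuous_on_def by blast
    have "uniformly_continuous_on {a..b} G" by (rule compact_uniformly_continuous[OF Gc compact_Icc])
    moreover have "e > 0" using e by simp
    ultimately obtain d2 where d2: "d2 > 0" and d2': "\<And>x x'. x \<in> {a..b} \<Longrightarrow> x' \<in> {a..b} \<Longrightarrow> dist x' x < d2 \<Longrightarrow> dist (G x') (G x) < e"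
      unfolding uniformly_continuous_on_def by blast
    show "\<exists>d>0. \<forall>s t. a \<le> s \<longrightarrow> s \<le> t \<longrightarrow> t \<le> b \<longrightarrow> t - s < d \<longrightarrow> norm (Q t - Q s) \<le> e * integral {s..t} w"
    proof (intro exI[of _ "min d1 d2"] conjI allI impI)
      show "min d1 d2 > 0" using d1 d2 by simp
      fix s t assume st: "a \<le> s" "s \<le> t" "t \<le> b" "t - s < min d1 d2"
      have sub: "{s..t} \<subseteq> {a..b}" using st by auto
      have fi': "f integrable_on {s..t}" and gi': "g integrable_on {s..t}"
        and hi': "h integrable_on {s..t}" and wi': "w integrable_on {s..t}"
        using integrable_subinterval_real[OF fi sub] integrable_subinterval_real[OF gi sub]
          integrable_subinterval_real[OF hi sub] integrable_subinterval_real[OF wi sub] by auto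
      have Fd: "F t - F s = integral {s..t} f" by (rule indef_diff[OF fi F st(1-3)])
      have Gd: "G t - G s = integral {s..t} g" by (rule indef_diff[OF gi G st(1-3)])
      have hd: "integral {a..t} h - integral {a..s} h = integral {s..t} h"
        using indef_diff[OF hi, of "\<lambda>x. integral {a..x} h", OF _ st(1-3)] by simp
      have K0: "((\<lambda>r. f r * G t + F s * g r - h r) has_integral
                 ((F t - F s) * G t + F s * (G t - G s) - integral {s..t} h)) {s..t}"
        unfolding Fd Gd
        by (rule has_integral_diff[OF has_integral_add[OF has_integral_mult_left[OF integrable_integral[OF fi']]
             has_integral_mult_right[OF integrable_integral[OF gi']]] integrable_integral[OF hi']])
      have K: "((\<lambda>r. f r * (G t - G r) + (F s - F r) * g r) has_integral (Q t - Q s)) {s..t}"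
      proof -
        have "(F t - F s) * G t + F s * (G t - G s) - integral {s..t} h = Q t - Q s"
          unfolding Q_def hd[symmetric] by (simp add: algebra_simps)
        moreover have "\<And>r. f r * G t + F s * g r - h r = f r * (G t - G r) + (F s - F r) * g r"
          unfolding h_def by (simp add: algebra_simps)
        ultimately show ?thesis using K0 by simp
      qed
      have "norm (Q t - Q s) = norm (integral {s..t} (\<lambda>r. f r * (G t - G r) + (F s - F r) * g r))"
        using K by (simp add: integral_unique)
      also have "\<dots> \<le> integral {s..t} (\<lambda>r. e * w r)"
      proof (rule integral_norm_bound_integral)
        show "(\<lambda>r. f r * (G t - G r) + (F s - F r) * g r) integrable_on {s..t}"
          using K by blast
        show "(\<lambda>r. e * w r) integrable_on {s..t}" using wi' by (rule integrable_on_mult_right)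
        fix r assume r: "r \<in> {s..t}"
        have rab: "r \<in> {a..b}" "t \<in> {a..b}" "s \<in> {a..b}" using r st by auto
        have "dist t r < d2" using r st by (simp add: dist_real_def)
        then have "norm (G t - G r) \<le> e" using d2'[OF rab(1) rab(2)] by (simp add: dist_norm)
        moreover have "dist s r < d1" using r st by (simp add: dist_real_def)
        then have "norm (F s - F r) \<le> e" using d1'[OF rab(1) rab(3)] by (simp add: dist_norm)
        ultimately have "norm (f r * (G t - G r)) + norm ((F s - F r) * g r) \<le> norm (f r) * e + e * norm (g r)"
          unfolding norm_mult by (intro add_mono mult_left_mono mult_right_mono) auto
        moreover have "norm (f r * (G t - G r) + (F s - F r) * g r) \<le> norm (f r * (G t - G r)) + norm ((F s - F r) * g r)"
          by (rule norm_triangle_ineq)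
        moreover have "norm (f r) * e + e * norm (g r) = e * w r"
          unfolding w_def by (simp add: algebra_simps)
        ultimately show "norm (f r * (G t - G r) + (F s - F r) * g r) \<le> e * w r"
          by linarith
      qed
      also have "\<dots> = e * integral {s..t} w" by (rule integral_mult[OF wi', symmetric])
      finally show "norm (Q t - Q s) \<le> e * integral {s..t} w" .
    qed
  qed
  then have "F b * G b - integral {a..b} h = F a * G a" by (simp add: Q_def)
  then have "integral {a..b} h = F b * G b - F a * G a" by (simp add: algebra_simps)
  then show ?thesis using integrable_integral[OF hi] unfolding h_def by metis
qed

lemma exp_taylor2: fixes dd :: "'a::{real_normed_field,euclidean_space}"
  shows "norm (exp dd - 1 - dd) \<le> exp (norm dd) * norm dd ^ 2"
proof -
  have "(\<Sum>i\<le>(1::nat). dd ^ i / fact i) = 1 + dd" by simp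
  then have "norm (exp dd - (1 + dd)) \<le> exp (norm dd) * (norm dd ^ Suc 1) / fact 1"
    using Taylor_exp_field[of dd 1] by simp
  moreover have "norm dd ^ Suc 1 = norm dd ^ 2" by (simp only: numeral_2_eq_2 One_nat_def)
  ultimately show ?thesis by (simp add: diff_diff_eq)
qed
lemma exp_shift: fixes F :: "real \<Rightarrow> 'a::{real_normed_field,euclidean_space}"
  assumes "dd = F t - F s"
  shows "exp (F t) = exp (F s) * exp dd"
proof -
  have "F t = F s + dd" using assms by simp
  then show ?thesis by (simp add: exp_add)
qed
lemma alg3: fixes E X dd i1 i2 :: "'a::{real_normed_field,euclidean_space}"
  shows "E * dd - (i1 - i2) = ((E * X - i1) - (E - i2)) - E * (X - 1 - dd)"
  by (simp add: algebra_simps)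

lemma exp_rule:
  fixes f F :: "real \<Rightarrow> 'a::{real_normed_field,euclidean_space}"
  assumes ab: "a \<le> b"
    and f: "f absolutely_integrable_on {a..b}"
    and F: "\<And>x. x \<in> {a..b} \<Longrightarrow> F x = F a + integral {a..x} f"
  shows "((\<lambda>t. exp (F t) * f t) has_integral (exp (F b) - exp (F a))) {a..b}"
proof -
  have fi: "f integrable_on {a..b}" and fni: "(\<lambda>x. norm (f x)) integrable_on {a..b}"
    using f absolutely_integrable_on_def by blast+
  have Fc: "continuous_on {a..b} F" by (rule indef_cont[OF fi F])
  have EFc: "continuous_on {a..b} (\<lambda>t. exp (F t))" by (intro continuous_intros Fc)
  define h where "h t = exp (F t) * f t" for t
  have "h absolutely_integrable_on {a..b}"
    unfolding h_def by (intro ai_mult_cont f EFc)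
  then have hi: "h integrable_on {a..b}"
    unfolding absolutely_integrable_on_def by simp
  obtain B where B: "B > 0" "\<And>x. x \<in> {a..b} \<Longrightarrow> norm (exp (F x)) \<le> B"
    using compact_imp_bounded[OF compact_continuous_image[OF EFc compact_Icc]]
    unfolding bounded_pos by auto
  define Q where "Q x = exp (F x) - integral {a..x} h" for x
  define w where "w t = norm (f t)" for t
  have wi: "w integrable_on {a..b}" unfolding w_def by (rule fni)
  have "Q b = Q a"
  proof (rule const_lemma[OF ab wi])
    fix e :: real assume e: "e > 0"
    define e1 where "e1 = min 1 (e / (2 * B * exp 1))"
    have e1: "e1 > 0" "e1 \<le> 1" using e B by (auto simp: e1_def)
    have "uniformly_continuous_on {a..b} F" by (rule compact_uniformly_continuous[OF Fc compact_Icc])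
    moreover have "e1 > 0" using e1 by simp
    ultimately obtain d1 where d1: "d1 > 0" and d1': "\<And>x x'. x \<in> {a..b} \<Longrightarrow> x' \<in> {a..b} \<Longrightarrow> dist x' x < d1 \<Longrightarrow> dist (F x') (F x) < e1"
      unfolding uniformly_continuous_on_def by blast
    have "uniformly_continuous_on {a..b} (\<lambda>x. exp (F x))" by (rule compact_uniformly_continuous[OF EFc compact_Icc])
    moreover have "e / 2 > 0" using e by simp
    ultimately obtain d2 where d2: "d2 > 0" and d2': "\<And>x x'. x \<in> {a..b} \<Longrightarrow> x' \<in> {a..b} \<Longrightarrow> dist x' x < d2 \<Longrightarrow> dist (exp (F x')) (exp (F x)) < e / 2"
      unfolding uniformly_continuous_on_def by blast
    show "\<exists>d>0. \<forall>s t. a \<le> s \<longrightarrow> s \<le> t \<longrightarrow> t \<le> b \<longrightarrow> t - s < d \<longrightarrow> norm (Q t - Q s) \<le> e * integral {s..t} w"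
    proof (intro exI[of _ "min d1 d2"] conjI allI impI)
      show "min d1 d2 > 0" using d1 d2 by simp
      fix s t assume st: "a \<le> s" "s \<le> t" "t \<le> b" "t - s < min d1 d2"
      have sub: "{s..t} \<subseteq> {a..b}" using st by auto
      have fi': "f integrable_on {s..t}" and hi': "h integrable_on {s..t}" and wi': "w integrable_on {s..t}"
        using integrable_subinterval_real[OF fi sub] integrable_subinterval_real[OF hi sub]
          integrable_subinterval_real[OF wi sub] by auto
      have Fd: "F t - F s = integral {s..t} f" by (rule indef_diff[OF fi F st(1-3)])
      have hd: "integral {a..t} h - integral {a..s} h = integral {s..t} h"
        using indef_diff[OF hi, of "\<lambda>x. integral {a..x} h", OF _ st(1-3)] by simp
      define dd where "dd = F t - F s"
      have ddle: "norm dd \<le> integral {s..t} w"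
        unfolding dd_def Fd w_def using fi' wi'[unfolded w_def] by (rule integral_norm_bound_integral) auto
      have ddsm: "norm dd \<le> e1"
        using d1'[of s t] st unfolding dd_def by (simp add: dist_norm dist_real_def)
      have K0: "((\<lambda>r. exp (F s) * f r - h r) has_integral (exp (F s) * dd - integral {s..t} h)) {s..t}"
        unfolding dd_def Fd
        by (rule has_integral_diff[OF has_integral_mult_right[OF integrable_integral[OF fi']] integrable_integral[OF hi']])
      have K: "((\<lambda>r. (exp (F s) - exp (F r)) * f r) has_integral
               ((Q t - Q s) - exp (F s) * (exp dd - 1 - dd))) {s..t}"
      proof -
        have eq: "exp (F t) = exp (F s) * exp dd" by (rule exp_shift[OF dd_def])
        have "exp (F s) * dd - integral {s..t} h = (Q t - Q s) - exp (F s) * (exp dd - 1 - dd)"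
          unfolding Q_def hd[symmetric] eq by (rule alg3)
        moreover have "\<And>r. exp (F s) * f r - h r = (exp (F s) - exp (F r)) * f r"
          unfolding h_def by (simp add: algebra_simps)
        ultimately show ?thesis using K0 by simp
      qed
      have T: "norm (exp dd - 1 - dd) \<le> exp (norm dd) * norm dd ^ 2"
        by (rule exp_taylor2)
      have "norm (exp (F s) * (exp dd - 1 - dd)) \<le> B * (exp 1 * (e1 * norm dd))"
      proof -
        have "norm (exp (F s) * (exp dd - 1 - dd)) \<le> B * (exp (norm dd) * norm dd ^ 2)"
          unfolding norm_mult using B(2)[of s] B(1) st T by (intro mult_mono) auto
        also have "\<dots> \<le> B * (exp 1 * (e1 * norm dd))"
          using ddsm e1 B by (intro mult_left_mono mult_mono) (auto simp: power2_eq_square intro: mult_right_mono)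
        finally show ?thesis .
      qed
      also have "\<dots> \<le> e / 2 * integral {s..t} w"
      proof -
        have "B * (exp 1 * (e1 * norm dd)) = (B * exp 1 * e1) * norm dd" by simp
        also have "\<dots> \<le> (e / 2) * norm dd"
        proof (rule mult_right_mono)
          have "B * exp 1 * e1 \<le> B * exp 1 * (e / (2 * B * exp 1))"
            using B e1 by (intro mult_left_mono) (auto simp: e1_def)
          also have "\<dots> = e / 2" using B by simp
          finally show "B * exp 1 * e1 \<le> e / 2" .
        qed simp
        also have "\<dots> \<le> e / 2 * integral {s..t} w" using ddle e by simp
        finally show ?thesis .
      qed
      finally have N1: "norm (exp (F s) * (exp dd - 1 - dd)) \<le> e / 2 * integral {s..t} w" .
      have "norm ((Q t - Q s) - exp (F s) * (exp dd - 1 - dd))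
            = norm (integral {s..t} (\<lambda>r. (exp (F s) - exp (F r)) * f r))"
        using K by (simp add: integral_unique)
      also have "\<dots> \<le> integral {s..t} (\<lambda>r. e / 2 * w r)"
      proof (rule integral_norm_bound_integral)
        show "(\<lambda>r. (exp (F s) - exp (F r)) * f r) integrable_on {s..t}"
          using K by blast
        show "(\<lambda>r. e / 2 * w r) integrable_on {s..t}" using wi' by (rule integrable_on_mult_right)
        fix r assume r: "r \<in> {s..t}"
        have rab: "r \<in> {a..b}" "s \<in> {a..b}" using r st by auto
        have "dist s r < d2" using r st by (simp add: dist_real_def)
        then have "norm (exp (F s) - exp (F r)) \<le> e / 2" using d2'[OF rab(1) rab(2)] by (simp add: dist_norm)
        then show "norm ((exp (F s) - exp (F r)) * f r) \<le> e / 2 * w r"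
          unfolding w_def norm_mult by (rule mult_right_mono) simp
      qed
      also have "\<dots> = e / 2 * integral {s..t} w" by (rule integral_mult[OF wi', symmetric])
      finally have N2: "norm ((Q t - Q s) - exp (F s) * (exp dd - 1 - dd)) \<le> e / 2 * integral {s..t} w" .
      have "norm (Q t - Q s) = norm (((Q t - Q s) - exp (F s) * (exp dd - 1 - dd)) + exp (F s) * (exp dd - 1 - dd))"
        by simp
      also have "\<dots> \<le> norm ((Q t - Q s) - exp (F s) * (exp dd - 1 - dd)) + norm (exp (F s) * (exp dd - 1 - dd))"
        by (rule norm_triangle_ineq)
      also have "\<dots> \<le> e * integral {s..t} w" using N1 N2 by simp
      finally show "norm (Q t - Q s) \<le> e * integral {s..t} w" .
    qed
  qed
  then have "exp (F b) - integral {a..b} h = exp (F a)" by (simp add: Q_def)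
  then have "integral {a..b} h = exp (F b) - exp (F a)" by (simp add: algebra_simps)
  then show ?thesis using integrable_integral[OF hi] unfolding h_def by metis
qed


lemma ai_mult_cont':
  fixes f G :: "real \<Rightarrow> 'a::{real_normed_field,euclidean_space}"
  assumes f: "f absolutely_integrable_on {a..b}" and G: "continuous_on {a..b} G"
  shows "(\<lambda>t. f t * G t) absolutely_integrable_on {a..b}"
  using ai_mult_cont[OF f G] by (simp add: mult.commute)

lemma exp_indef:
  fixes f F :: "real \<Rightarrow> 'a::{real_normed_field,euclidean_space}"
  assumes f: "f absolutely_integrable_on {a..b}"
    and F: "\<And>x. x \<in> {a..b} \<Longrightarrow> F x = F a + integral {a..x} f"
    and x: "x \<in> {a..b}"
  shows "exp (F x) = exp (F a) + integral {a..x} (\<lambda>t. exp (F t) * f t)"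
proof -
  have sub: "{a..x} \<subseteq> {a..b}" using x by auto
  have "((\<lambda>t. exp (F t) * f t) has_integral (exp (F x) - exp (F a))) {a..x}"
  proof (rule exp_rule)
    show "a \<le> x" using x by auto
    show "f absolutely_integrable_on {a..x}" using absolutely_integrable_on_subinterval[OF f sub] .
    show "F y = F a + integral {a..y} f" if "y \<in> {a..x}" for y using F[of y] that x by auto
  qed
  then show ?thesis by (simp add: integral_unique)
qed

lemma gronwall:
  fixes \<phi> k :: "real \<Rightarrow> real"
  assumes X: "0 \<le> X" and \<phi>c: "continuous_on {0..X} \<phi>" and k: "k absolutely_integrable_on {0..X}"
    and k0: "\<And>t. t \<in> {0..X} \<Longrightarrow> 0 \<le> k t" and C: "0 \<le> C"
    and le: "\<And>y. y \<in> {0..X} \<Longrightarrow> \<phi> y \<le> D + C * integral {0..y} (\<lambda>t. k t * \<phi> t)"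
  shows "\<phi> X \<le> D * exp (C * integral {0..X} k)"
proof -
  have kphi: "(\<lambda>t. k t * \<phi> t) absolutely_integrable_on {0..X}"
    by (rule ai_mult_cont'[OF k \<phi>c])
  define f1 where "f1 t = C * (k t * \<phi> t)" for t
  have f1: "f1 absolutely_integrable_on {0..X}"
    unfolding f1_def using kphi by (rule set_integrable_mult_right)
  define \<psi> where "\<psi> y = D + C * integral {0..y} (\<lambda>t. k t * \<phi> t)" for y
  have \<psi>: "\<psi> y = \<psi> 0 + integral {0..y} f1" if "y \<in> {0..X}" for y
  proof -
    have "(\<lambda>t. k t * \<phi> t) integrable_on {0..y}"
      using integrable_subinterval_real[of _ 0 X] kphi that unfolding absolutely_integrable_on_def by auto
    then show ?thesis unfolding \<psi>_def f1_def by simp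
  qed
  define fe where "fe t = - (C * k t)" for t
  have fe: "fe absolutely_integrable_on {0..X}"
    using set_integrable_mult_right[OF k, of "- C"] unfolding fe_def by simp
  define Fe where "Fe y = - (C * integral {0..y} k)" for y
  have Fe: "Fe y = Fe 0 + integral {0..y} fe" if "y \<in> {0..X}" for y
  proof -
    have "k integrable_on {0..y}"
      using integrable_subinterval_real[of _ 0 X] k that unfolding absolutely_integrable_on_def by auto
    then show ?thesis unfolding Fe_def fe_def by simp
  qed
  have Fec: "continuous_on {0..X} Fe"
    by (rule indef_cont[OF _ Fe]) (use fe absolutely_integrable_on_def in blast)
  define g where "g t = exp (Fe t) * fe t" for t
  have g: "g absolutely_integrable_on {0..X}"
    unfolding g_def by (intro ai_mult_cont fe continuous_intros Fec)
  have E: "exp (Fe y) = exp (Fe 0) + integral {0..y} g" if "y \<in> {0..X}" for y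
    unfolding g_def by (rule exp_indef[OF fe Fe that])
  have P: "((\<lambda>t. f1 t * exp (Fe t) + \<psi> t * g t) has_integral (\<psi> X * exp (Fe X) - \<psi> 0 * exp (Fe 0))) {0..X}"
    by (rule prod_rule[OF X f1 g \<psi> E])
  have "\<psi> X * exp (Fe X) - \<psi> 0 * exp (Fe 0) \<le> 0"
  proof (rule has_integral_le[OF P has_integral_0])
    fix t assume t: "t \<in> {0..X}"
    have "f1 t * exp (Fe t) + \<psi> t * g t = C * k t * exp (Fe t) * (\<phi> t - \<psi> t)"
      unfolding f1_def g_def fe_def by (simp add: algebra_simps)
    moreover have "\<phi> t - \<psi> t \<le> 0" using le[OF t] unfolding \<psi>_def by simp
    moreover have "0 \<le> C * k t * exp (Fe t)" using C k0[OF t] by simp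
    ultimately show "f1 t * exp (Fe t) + \<psi> t * g t \<le> 0"
      by (simp add: mult_nonneg_nonpos)
  qed
  moreover have "\<psi> 0 = D" "Fe 0 = 0" by (simp_all add: \<psi>_def Fe_def)
  ultimately have "\<psi> X * exp (Fe X) \<le> D" by simp
  then have "\<psi> X \<le> D * exp (- Fe X)"
    by (simp add: exp_minus field_simps)
  moreover have "\<phi> X \<le> \<psi> X" using le[of X] X unfolding \<psi>_def by simp
  ultimately show ?thesis unfolding Fe_def by simp
qed

lemma scalar_voc:
  fixes l c z :: "real \<Rightarrow> complex"
  assumes y: "0 \<le> y" and l: "l absolutely_integrable_on {0..y}"
    and g: "(\<lambda>t. l t * z t + c t) absolutely_integrable_on {0..y}"
    and z: "\<And>s. s \<in> {0..y} \<Longrightarrow> ((\<lambda>t. l t * z t + c t) has_integral (z s - z 0)) {0..s}"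
  shows "((\<lambda>t. exp (- integral {0..t} l) * c t) has_integral
          (exp (- integral {0..y} l) * z y - z 0)) {0..y}"
proof -
  define F where "F s = - integral {0..s} l" for s
  define f where "f t = - l t" for t
  have f: "f absolutely_integrable_on {0..y}"
    using set_integrable_mult_right[OF l, of "- 1"] unfolding f_def by simp
  have F: "F s = F 0 + integral {0..s} f" if "s \<in> {0..y}" for s
    unfolding F_def f_def by simp
  have Fc: "continuous_on {0..y} F"
    by (rule indef_cont[OF _ F]) (use f absolutely_integrable_on_def in blast)
  define e where "e t = exp (F t) * f t" for t
  have e: "e absolutely_integrable_on {0..y}"
    unfolding e_def by (intro ai_mult_cont f continuous_intros Fc)
  have E: "exp (F s) = exp (F 0) + integral {0..s} e" if "s \<in> {0..y}" for s
    unfolding e_def by (rule exp_indef[OF f F that])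
  have Z: "z s = z 0 + integral {0..s} (\<lambda>t. l t * z t + c t)" if "s \<in> {0..y}" for s
    using z[OF that] by (simp add: integral_unique)
  have P: "((\<lambda>t. e t * z t + exp (F t) * (l t * z t + c t)) has_integral (exp (F y) * z y - exp (F 0) * z 0)) {0..y}"
    by (rule prod_rule[OF y e g E Z])
  have "e t * z t + exp (F t) * (l t * z t + c t) = exp (F t) * c t" for t
    unfolding e_def f_def by (simp add: algebra_simps)
  moreover have "F 0 = 0" by (simp add: F_def)
  ultimately show ?thesis using P unfolding F_def by simp
qed

lemma diag_comp:
  fixes l :: complex and A :: "complex^2^2" and w :: "complex^2"
  shows "((diag_pm l + A) *v w) $ 1 = l * w $ 1 + (A *v w) $ 1"
    and "((diag_pm l + A) *v w) $ 2 = - l * w $ 2 + (A *v w) $ 2"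
  by (simp_all add: matrix_vector_mult_add_rdistrib matrix_vector_mult_def diag_pm_def sum_2 algebra_simps)

lemma norm2: fixes w :: "complex^2"
  shows "norm w = sqrt ((norm (w $ 1))\<^sup>2 + (norm (w $ 2))\<^sup>2)"
  by (simp add: norm_vec_def L2_set_def sum_2)

lemma sqrt_comb:
  fixes \<alpha> \<beta> N J E :: real
  assumes "0 \<le> \<alpha>" "\<alpha> \<le> N + J" "0 \<le> \<beta>" "\<beta> \<le> E * (N + J)" "0 \<le> E"
  shows "sqrt (\<alpha>\<^sup>2 + \<beta>\<^sup>2) \<le> sqrt (1 + E\<^sup>2) * (N + J)"
proof (rule real_le_lsqrt)
  have NJ: "0 \<le> N + J" using assms by linarith
  then show "0 \<le> sqrt (1 + E\<^sup>2) * (N + J)" by simp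
  have "\<alpha>\<^sup>2 \<le> (N + J)\<^sup>2" using assms by (intro power_mono) auto
  moreover have "\<beta>\<^sup>2 \<le> (E * (N + J))\<^sup>2" using assms by (intro power_mono) auto
  moreover have "(E * (N + J))\<^sup>2 = E\<^sup>2 * (N + J)\<^sup>2" by (simp add: power_mult_distrib)
  ultimately have "\<alpha>\<^sup>2 + \<beta>\<^sup>2 \<le> (1 + E\<^sup>2) * (N + J)\<^sup>2" by (simp add: distrib_right)
  also have "\<dots> = (sqrt (1 + E\<^sup>2) * (N + J))\<^sup>2" by (simp add: power_mult_distrib)
  finally show "\<alpha>\<^sup>2 + \<beta>\<^sup>2 \<le> (sqrt (1 + E\<^sup>2) * (N + J))\<^sup>2" .
qed

lemma exp_sq: "(exp (2 * (M::real)))\<^sup>2 = exp (4 * M)"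
  by (simp add: power2_eq_square flip: exp_add)

theorem lemma4p1:
  fixes lam :: "real \<Rightarrow> complex" and R :: "real \<Rightarrow> complex^2^2"
    and u :: "real \<Rightarrow> complex^2" and M :: real
  assumes lam_loc: "\<And>x. 0 \<le> x \<Longrightarrow> lam absolutely_integrable_on {0..x}"
    and R_meas: "R measurable_on {0..}"
    and R_int: "(\<lambda>t. opnorm (R t)) integrable_on {0..}"
    and M: "\<And>x y. 0 \<le> x \<Longrightarrow> x \<le> y \<Longrightarrow> integral {x..y} (\<lambda>t. Re (lam t)) \<ge> - M"
    and sol_int: "\<And>x. 0 \<le> x \<Longrightarrow>
       (\<lambda>t. (diag_pm (lam t) + R t) *v u t) absolutely_integrable_on {0..x}"
    and sol: "\<And>x. 0 \<le> x \<Longrightarrow>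
       ((\<lambda>t. (diag_pm (lam t) + R t) *v u t) has_integral (u x - u 0)) {0..x}"
    and x: "0 \<le> x"
  shows "norm (u x) \<le> norm (u 0) * exp (integral {0..x} (\<lambda>t. Re (lam t)))
           * sqrt (1 + exp (4 * M))
           * exp (sqrt (1 + exp (4 * M)) * integral {0..} (\<lambda>t. opnorm (R t)))"
proof -
  define v where "v t = (diag_pm (lam t) + R t) *v u t" for t
  define r where "r t = R t *v u t" for t
  define k where "k t = opnorm (R t)" for t
  define \<Lambda> where "\<Lambda> t = integral {0..t} lam" for t
  define P where "P t = integral {0..t} (\<lambda>s. Re (lam s))" for t
  define N where "N = norm (u 0)"
  define Cc where "Cc = sqrt (1 + exp (4 * M))"
  define E2 where "E2 = exp (2 * M)"
  define \<phi> where "\<phi> t = exp (- P t) * norm (u t)" for t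
  define J where "J y = integral {0..y} (\<lambda>t. k t * \<phi> t)" for y
  have lami: "lam integrable_on {0..y}" if "0 \<le> y" for y
    using lam_loc[OF that] absolutely_integrable_on_def by blast
  have Rei: "(\<lambda>s. Re (lam s)) integrable_on {0..y}" if "0 \<le> y" for y
    using integrable_linear[OF lami[OF that] bounded_linear_Re] by (simp add: o_def)
  have PRe: "P t = Re (\<Lambda> t)" if "0 \<le> t" for t
  proof -
    have "((\<lambda>s. Re (lam s)) has_integral Re (\<Lambda> t)) {0..t}"
      using has_integral_linear[OF integrable_integral[OF lami[OF that]] bounded_linear_Re]
      by (simp add: o_def \<Lambda>_def)
    then show ?thesis unfolding P_def by (simp add: integral_unique)
  qed
  have M0: "0 \<le> M" using M[of 0 0] by simp
  have Pge: "- M \<le> P y" if "0 \<le> y" for y using M[of 0 y] that by (simp add: P_def)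
  have Pdiff: "- M \<le> P y - P t" if "0 \<le> t" "t \<le> y" for t y
  proof -
    have "P y - P t = integral {t..y} (\<lambda>s. Re (lam s))"
      by (rule indef_diff[OF Rei[of y], of P]) (use that in \<open>auto simp: P_def\<close>)
    then show ?thesis using M[OF that] by simp
  qed
  have k0: "0 \<le> k t" for t unfolding k_def opnorm_def
    by (rule onorm_pos_le[OF matrix_vector_mul_bounded_linear])
  have rk: "norm (r t) \<le> k t * norm (u t)" for t unfolding r_def k_def opnorm_def
    by (rule onorm[OF matrix_vector_mul_bounded_linear])
  have ki: "k integrable_on {0..y}" for y
    unfolding k_def by (rule integrable_on_subinterval[OF R_int]) auto
  have kai: "k absolutely_integrable_on {0..y}" for y
    by (rule nonnegative_absolutely_integrable_1[OF ki k0])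
  have vi: "v integrable_on {0..y}" if "0 \<le> y" for y
    using sol_int[OF that] absolutely_integrable_on_def unfolding v_def by blast
  have U: "u s = u 0 + integral {0..s} v" if "0 \<le> s" for s
    using sol[OF that] unfolding v_def by (simp add: integral_unique)
  have uc: "continuous_on {0..y} u" if "0 \<le> y" for y
    by (rule indef_cont[OF vi[OF that]]) (rule U; simp)
  have \<Lambda>c: "continuous_on {0..y} \<Lambda>" if "0 \<le> y" for y
    by (rule indef_cont[OF lami[OF that]]) (auto simp: \<Lambda>_def)
  have Pc: "continuous_on {0..y} P" if "0 \<le> y" for y
  proof -
    have "continuous_on {0..y} (\<lambda>t. Re (\<Lambda> t))" by (intro continuous_intros \<Lambda>c that)
    then show ?thesis by (rule continuous_on_eq) (use PRe in auto)
  qed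
  have \<phi>c: "continuous_on {0..y} \<phi>" if "0 \<le> y" for y
    unfolding \<phi>_def by (intro continuous_intros Pc uc that)
  have v1: "v t $ 1 = lam t * u t $ 1 + r t $ 1" for t
    unfolding v_def r_def by (rule diag_comp(1))
  have v2: "v t $ 2 = (- lam t) * u t $ 2 + r t $ 2" for t
    unfolding v_def r_def by (rule diag_comp(2))
  have comp_int: "((\<lambda>t. v t $ i) has_integral (u s $ i - u 0 $ i)) {0..s}" if "0 \<le> s" for s i
    using has_integral_linear[OF sol[OF that] bounded_linear_vec_nth[of i]]
    unfolding v_def by (simp add: o_def)
  have comp_ai: "(\<lambda>t. v t $ i) absolutely_integrable_on {0..s}" if "0 \<le> s" for s i
    using absolutely_integrable_linear[OF sol_int[OF that] bounded_linear_vec_nth[of i]]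
    unfolding v_def by (simp add: o_def)
  have nlam: "(\<lambda>t. - lam t) absolutely_integrable_on {0..y}" if "0 \<le> y" for y
    using set_integrable_mult_right[OF lam_loc[OF that], of "- 1"] by simp
  have V1: "((\<lambda>t. exp (- \<Lambda> t) * r t $ 1) has_integral (exp (- \<Lambda> y) * u y $ 1 - u 0 $ 1)) {0..y}"
    if "0 \<le> y" for y
  proof -
    have "((\<lambda>t. exp (- integral {0..t} lam) * r t $ 1) has_integral
          (exp (- integral {0..y} lam) * u y $ 1 - u 0 $ 1)) {0..y}"
    proof (rule scalar_voc[OF that lam_loc[OF that]])
      show "(\<lambda>t. lam t * u t $ 1 + r t $ 1) absolutely_integrable_on {0..y}"
        using comp_ai[OF that, of 1] by (simp add: v1)
      show "((\<lambda>t. lam t * u t $ 1 + r t $ 1) has_integral (u s $ 1 - u 0 $ 1)) {0..s}"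
        if "s \<in> {0..y}" for s
        using comp_int[of s 1] that by (simp add: v1)
    qed
    then show ?thesis by (simp add: \<Lambda>_def)
  qed
  have V2: "((\<lambda>t. exp (\<Lambda> t) * r t $ 2) has_integral (exp (\<Lambda> y) * u y $ 2 - u 0 $ 2)) {0..y}"
    if "0 \<le> y" for y
  proof -
    have "((\<lambda>t. exp (- integral {0..t} (\<lambda>t. - lam t)) * r t $ 2) has_integral
          (exp (- integral {0..y} (\<lambda>t. - lam t)) * u y $ 2 - u 0 $ 2)) {0..y}"
    proof (rule scalar_voc[OF that nlam[OF that]])
      show "(\<lambda>t. (- lam t) * u t $ 2 + r t $ 2) absolutely_integrable_on {0..y}"
        using comp_ai[OF that, of 2] by (simp add: v2)
      show "((\<lambda>t. (- lam t) * u t $ 2 + r t $ 2) has_integral (u s $ 2 - u 0 $ 2)) {0..s}"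
        if "s \<in> {0..y}" for s
        using comp_int[of s 2] that by (simp add: v2)
    qed
    then show ?thesis by (simp add: \<Lambda>_def)
  qed
  have kphi: "(\<lambda>t. k t * \<phi> t) integrable_on {0..y}" if "0 \<le> y" for y
    using ai_mult_cont'[OF kai \<phi>c[OF that]] absolutely_integrable_on_def by blast
  have est: "\<phi> y \<le> Cc * N + Cc * J y" if y: "y \<in> {0..x}" for y
  proof -
    have y0: "0 \<le> y" using y by auto
    define \<alpha> where "\<alpha> = exp (- P y) * norm (u y $ 1)"
    define \<beta> where "\<beta> = exp (- P y) * norm (u y $ 2)"
    have al: "\<alpha> \<le> N + J y"
    proof -
      define I1 where "I1 = integral {0..y} (\<lambda>t. exp (- \<Lambda> t) * r t $ 1)"
      have eq: "exp (- \<Lambda> y) * u y $ 1 = u 0 $ 1 + I1"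
        using V1[OF y0] unfolding I1_def by (simp add: integral_unique)
      have "\<alpha> = norm (exp (- \<Lambda> y) * u y $ 1)"
        unfolding \<alpha>_def norm_mult using PRe[OF y0] by simp
      also have "\<dots> \<le> norm (u 0 $ 1) + norm I1" unfolding eq by (rule norm_triangle_ineq)
      also have "norm I1 \<le> J y"
        unfolding I1_def J_def
      proof (rule integral_norm_bound_integral)
        show "(\<lambda>t. exp (- \<Lambda> t) * r t $ 1) integrable_on {0..y}" using V1[OF y0] by blast
        show "(\<lambda>t. k t * \<phi> t) integrable_on {0..y}" by (rule kphi[OF y0])
        fix t assume t: "t \<in> {0..y}"
        then have t0: "0 \<le> t" by auto
        have "norm (exp (- \<Lambda> t) * r t $ 1) = exp (- P t) * norm (r t $ 1)"
          unfolding norm_mult using PRe[OF t0] by simp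
        also have "\<dots> \<le> exp (- P t) * (k t * norm (u t))"
          using order_trans[OF Finite_Cartesian_Product.norm_nth_le rk] by (intro mult_left_mono) auto
        also have "\<dots> = k t * \<phi> t" unfolding \<phi>_def by simp
        finally show "norm (exp (- \<Lambda> t) * r t $ 1) \<le> k t * \<phi> t" .
      qed
      moreover have "norm (u 0 $ 1) \<le> N" unfolding N_def by (rule Finite_Cartesian_Product.norm_nth_le)
      ultimately show ?thesis by simp
    qed
    have be: "\<beta> \<le> E2 * (N + J y)"
    proof -
      define I2 where "I2 = integral {0..y} (\<lambda>t. exp (\<Lambda> t) * r t $ 2)"
      define I2' where "I2' = integral {0..y} (\<lambda>t. k t * (exp (P t) * norm (u t)))"
      have eq: "exp (\<Lambda> y) * u y $ 2 = u 0 $ 2 + I2"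
        using V2[OF y0] unfolding I2_def by (simp add: integral_unique)
      have c2: "continuous_on {0..y} (\<lambda>t. exp (P t) * norm (u t))"
        by (intro continuous_intros Pc uc y0)
      have i2': "(\<lambda>t. k t * (exp (P t) * norm (u t))) integrable_on {0..y}"
        using ai_mult_cont'[OF kai c2] absolutely_integrable_on_def by blast
      have "exp (P y) * norm (u y $ 2) = norm (exp (\<Lambda> y) * u y $ 2)"
        unfolding norm_mult using PRe[OF y0] by simp
      also have "\<dots> \<le> norm (u 0 $ 2) + norm I2" unfolding eq by (rule norm_triangle_ineq)
      also have "norm I2 \<le> I2'"
        unfolding I2_def I2'_def
      proof (rule integral_norm_bound_integral)
        show "(\<lambda>t. exp (\<Lambda> t) * r t $ 2) integrable_on {0..y}" using V2[OF y0] by blast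
        show "(\<lambda>t. k t * (exp (P t) * norm (u t))) integrable_on {0..y}" by (rule i2')
        fix t assume t: "t \<in> {0..y}"
        then have t0: "0 \<le> t" by auto
        have "norm (exp (\<Lambda> t) * r t $ 2) = exp (P t) * norm (r t $ 2)"
          unfolding norm_mult using PRe[OF t0] by simp
        also have "\<dots> \<le> exp (P t) * (k t * norm (u t))"
          using order_trans[OF Finite_Cartesian_Product.norm_nth_le rk] by (intro mult_left_mono) auto
        also have "\<dots> = k t * (exp (P t) * norm (u t))" by simp
        finally show "norm (exp (\<Lambda> t) * r t $ 2) \<le> k t * (exp (P t) * norm (u t))" .
      qed
      finally have b1: "exp (P y) * norm (u y $ 2) \<le> norm (u 0 $ 2) + I2'" by simp
      have "\<beta> = exp (- 2 * P y) * (exp (P y) * norm (u y $ 2))"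
        unfolding \<beta>_def by (simp add: mult.assoc[symmetric] flip: exp_add)
      also have "\<dots> \<le> exp (- 2 * P y) * (norm (u 0 $ 2) + I2')"
        using b1 by (intro mult_left_mono) auto
      also have "\<dots> = exp (- 2 * P y) * norm (u 0 $ 2) + exp (- 2 * P y) * I2'"
        by (simp add: distrib_left)
      also have "exp (- 2 * P y) * norm (u 0 $ 2) \<le> E2 * N"
      proof (rule mult_mono)
        show "exp (- 2 * P y) \<le> E2" unfolding E2_def using Pge[OF y0] by simp
        show "norm (u 0 $ 2) \<le> N" unfolding N_def by (rule Finite_Cartesian_Product.norm_nth_le)
      qed (auto simp: E2_def)
      also have "exp (- 2 * P y) * I2' \<le> E2 * J y"
      proof -
        have "exp (- 2 * P y) * I2' = integral {0..y} (\<lambda>t. exp (- 2 * P y) * (k t * (exp (P t) * norm (u t))))"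
          unfolding I2'_def by simp
        also have "\<dots> \<le> integral {0..y} (\<lambda>t. E2 * (k t * \<phi> t))"
        proof (rule integral_le)
          show "(\<lambda>t. exp (- 2 * P y) * (k t * (exp (P t) * norm (u t)))) integrable_on {0..y}"
            using i2' by (rule integrable_on_mult_right)
          show "(\<lambda>t. E2 * (k t * \<phi> t)) integrable_on {0..y}"
            using kphi[OF y0] by (rule integrable_on_mult_right)
          fix t assume t: "t \<in> {0..y}"
          then have "- M \<le> P y - P t" using Pdiff by auto
          then have "exp (- 2 * P y) * exp (P t) \<le> E2 * exp (- P t)"
            unfolding E2_def by (simp flip: exp_add)
          then have "exp (- 2 * P y) * exp (P t) * (k t * norm (u t)) \<le> E2 * exp (- P t) * (k t * norm (u t))"
            using k0[of t] by (intro mult_right_mono) auto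
          then show "exp (- 2 * P y) * (k t * (exp (P t) * norm (u t))) \<le> E2 * (k t * \<phi> t)"
            unfolding \<phi>_def by (simp add: algebra_simps)
        qed
        also have "\<dots> = E2 * J y" unfolding J_def by simp
        finally show ?thesis .
      qed
      finally show ?thesis by (simp add: distrib_left)
    qed
    have "\<phi> y = sqrt (\<alpha>\<^sup>2 + \<beta>\<^sup>2)"
    proof -
      have "\<phi> y = exp (- P y) * sqrt ((norm (u y $ 1))\<^sup>2 + (norm (u y $ 2))\<^sup>2)"
        unfolding \<phi>_def by (subst norm2) simp
      also have "\<dots> = sqrt ((exp (- P y))\<^sup>2 * ((norm (u y $ 1))\<^sup>2 + (norm (u y $ 2))\<^sup>2))"
        by (simp add: real_sqrt_mult)
      also have "\<dots> = sqrt (\<alpha>\<^sup>2 + \<beta>\<^sup>2)"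
        unfolding \<alpha>_def \<beta>_def by (simp add: power_mult_distrib distrib_left)
      finally show ?thesis .
    qed
    also have "\<dots> \<le> sqrt (1 + E2\<^sup>2) * (N + J y)"
      by (rule sqrt_comb) (use al be in \<open>auto simp: \<alpha>_def \<beta>_def E2_def\<close>)
    also have "sqrt (1 + E2\<^sup>2) = Cc" unfolding Cc_def E2_def by (simp add: exp_sq)
    finally show ?thesis by (simp add: distrib_left)
  qed
  have Cc0: "0 \<le> Cc" unfolding Cc_def by simp
  have G: "\<phi> x \<le> (Cc * N) * exp (Cc * integral {0..x} k)"
    by (rule gronwall[OF x \<phi>c[OF x] kai k0 Cc0]) (use est in \<open>auto simp: J_def\<close>)
  have Kle: "integral {0..x} k \<le> integral {0..} k"
  proof (rule integral_subset_le)
    have "k = (\<lambda>t. opnorm (R t))" by (rule ext) (simp add: k_def)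
    then show "k integrable_on {0..}" using R_int by simp
  qed (use ki k0 in auto)
  have "norm (u x) = exp (P x) * \<phi> x"
    unfolding \<phi>_def by (simp add: mult.assoc[symmetric] flip: exp_add)
  also have "\<dots> \<le> exp (P x) * ((Cc * N) * exp (Cc * integral {0..x} k))"
    using G by (intro mult_left_mono) auto
  also have "\<dots> \<le> exp (P x) * ((Cc * N) * exp (Cc * integral {0..} k))"
    using Kle Cc0 by (intro mult_left_mono mult_nonneg_nonneg) (auto simp: N_def mult_left_mono)
  finally show ?thesis unfolding P_def N_def Cc_def k_def by (simp add: algebra_simps)
qed

end
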